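(* Let $f_{\mathrm B}$ be a Bad Teacher. For any unlearnable sample $i\in\mathcal S_U$ and any value $f_{\mathbf W}\in\mathbb R$ of the student logit, the derivatives of the per-sample adversarial distillation loss and adversarial training loss with respect to the student logit satisfy $\left|\dfrac{\partial\mathcal L_{\mathrm{AD}}}{\partial f_{\mathbf W}}-\dfrac{\partial\mathcal L_{\mathrm{AT}}}{\partial f_{\mathbf W}}\right|\le e^{-Cd}$.
   Context: $\ell(z)=\log(1+e^{-z})$, $\sigma(z)=(1+e^{-z})^{-1}$. Labeled training samples $(\mathbf X_i,y_i)$, $y_i\in\{\pm1\}$, indices partitioned $[N]=\mathcal S_L\sqcup\mathcal S_U$. As functions of the student's logit $f_{\mathbf W}$ (the student output on the adversarial input of sample $i$), $\mathcal L_{\mathrm{AT}}=\ell(y_if_{\mathbf W})$ and $\mathcal L_{\mathrm{AD}}=\sigma(y_if_{\mathrm T}(\mathbf X_i))\ell(y_if_{\mathbf W})+\sigma(-y_if_{\mathrm T}(\mathbf X_i))\ell(-y_if_{\mathbf W})$ for a fixed teacher $f_{\mathrm T}$. A Bad Teacher $f_{\mathrm B}$ satisfies $y_if_{\mathrm B}(\mathbf X_i)\ge\Gamma$ for all $i\in[N]$ (both learnable and unlearnable samples). Standing assumption: $\Gamma\ge Cd$, where $d$ is the data dimension and $C>0$ is a (sufficiently large) universal constant. *)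

theory Defs
  imports "HOL-Analysis.Analysis"
begin

definition logloss :: "real \<Rightarrow> real" where
  "logloss z = ln (1 + exp (- z))"

definition sigmoid :: "real \<Rightarrow> real" where
  "sigmoid z = 1 / (1 + exp (- z))"

definition L_AT :: "real \<Rightarrow> real \<Rightarrow> real" where
  "L_AT y z = logloss (y * z)"

text \<open>Per-sample adversarial distillation loss; t is the teacher logit on the clean input.\<close>
definition L_AD :: "real \<Rightarrow> real \<Rightarrow> real \<Rightarrow> real" where
  "L_AD t y z = sigmoid (y * t) * logloss (y * z) + sigmoid (- y * t) * logloss (- y * z)"

definition bad_teacher :: "(nat \<Rightarrow> 'x) \<Rightarrow> (nat \<Rightarrow> real) \<Rightarrow> nat \<Rightarrow> real \<Rightarrow> ('x \<Rightarrow> real) \<Rightarrow> bool" where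
  "bad_teacher X y N \<Gamma> fB \<longleftrightarrow> (\<forall>i\<in>{1..N}. y i * fB (X i) \<ge> \<Gamma>)"

end

theory Submission
  imports Defs
begin

lemma logloss_deriv:
  "((\<lambda>z. logloss (c * z)) has_real_derivative (c * (- exp (- (c*z)) / (1 + exp (- (c*z)))))) (at z)"
proof -
  have p: "1 + exp (- (c*z)) > 0" by (simp add: add_pos_pos)
  have "((\<lambda>z. ln (1 + exp (- (c * z)))) has_real_derivative
     (1 / (1 + exp (- (c*z)))) * (0 + exp (- (c*z)) * (- (c * 1)))) (at z)"
    by (intro DERIV_ln_divide[THEN DERIV_chain2[where g="\<lambda>z. 1 + exp (- (c * z))"]] p
        derivative_intros DERIV_cmult[OF DERIV_ident])
  thus ?thesis unfolding logloss_def by (simp add: field_simps)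
qed

lemma L_AT_deriv: "deriv (L_AT y) w = y * (- exp (- (y*w)) / (1 + exp (- (y*w))))"
  unfolding L_AT_def[abs_def] by (rule DERIV_imp_deriv[OF logloss_deriv])

lemma L_AD_deriv: "deriv (L_AD t y) w =
   sigmoid (y*t) * (y * (- exp (- (y*w)) / (1 + exp (- (y*w)))))
 + sigmoid (- y*t) * ((-y) * (- exp (- ((-y)*w)) / (1 + exp (- ((-y)*w)))))"
  unfolding L_AD_def[abs_def]
  apply (rule DERIV_imp_deriv)
  apply (rule derivative_eq_intros logloss_deriv[of y] logloss_deriv[of "-y", simplified] | simp)+
  apply (simp add: algebra_simps)
  done

theorem lemmaH2:
  fixes X :: "nat \<Rightarrow> real ^ 'd" and y :: "nat \<Rightarrow> real" and N :: nat
    and SL SU :: "nat set" and \<Gamma> C :: real and fB :: "real ^ 'd \<Rightarrow> real"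
    and i :: nat and w :: real
  assumes labels: "\<forall>j\<in>{1..N}. y j \<in> {-1, 1}"
    and part: "SL \<union> SU = {1..N}" "SL \<inter> SU = {}"
    and C_pos: "C > 0"
    and Gamma_ge: "\<Gamma> \<ge> C * real CARD('d)"
    and bad: "bad_teacher X y N \<Gamma> fB"
    and unl: "i \<in> SU"
  shows "\<bar>deriv (L_AD (fB (X i)) (y i)) w - deriv (L_AT (y i)) w\<bar>
           \<le> exp (- C * real CARD('d))"
proof -
  have iN: "i \<in> {1..N}" using part unl by blast
  define s where "s = y i"
  define t where "t = fB (X i)"
  have s: "s = 1 \<or> s = -1" using labels iN s_def by auto
  have ta: "s * t \<ge> \<Gamma>" using bad iN unfolding bad_teacher_def s_def t_def by auto
  define a where "a = s * t"
  define u where "u = exp (- (s*w))"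
  define v where "v = exp (s*w)"
  have uv: "u * v = 1" unfolding u_def v_def by (simp add: exp_minus field_simps)
  have u0: "u > 0" "v > 0" unfolding u_def v_def by auto
  have diff: "deriv (L_AD t s) w - deriv (L_AT s) w = s * sigmoid (- a)"
  proof -
    have e1: "exp (- (- s * w)) = v" unfolding v_def by simp
    have "deriv (L_AD t s) w - deriv (L_AT s) w =
       sigmoid a * (s * (- u / (1 + u))) + sigmoid (- a) * ((-s) * (- v / (1 + v)))
        - s * (- u / (1 + u))"
      unfolding L_AD_deriv L_AT_deriv a_def u_def using e1 by (simp add: v_def)
    also have "\<dots> = s * ((1 - sigmoid a) * (u / (1+u)) + sigmoid (- a) * (v / (1+v)))"
      by (simp add: algebra_simps add_divide_distrib diff_divide_distrib)
    also have "1 - sigmoid a = sigmoid (- a)"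
      proof -
      have "1 + exp a > 0" by (simp add: add_pos_pos)
      thus ?thesis unfolding sigmoid_def by (simp add: exp_minus field_simps)
    qed
    also have "u / (1+u) + v/(1+v) = 1"
      using uv u0 by (simp add: field_simps)
    hence "sigmoid (- a) * (u / (1+u)) + sigmoid (- a) * (v / (1+v)) = sigmoid (-a)"
      by (metis distrib_left mult.right_neutral)
    finally show ?thesis by simp
  qed
  have "\<bar>s * sigmoid (- a)\<bar> = sigmoid (- a)"
    using s by (auto simp: sigmoid_def add_pos_pos)
  also have "sigmoid (- a) \<le> exp (- a)"
    unfolding sigmoid_def exp_minus inverse_eq_divide by (rule frac_le) auto
  also have "exp (- a) \<le> exp (- C * real CARD('d))"
    using ta Gamma_ge unfolding a_def by simp
  finally show ?thesis using diff unfolding s_def t_def by simp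
qed

end
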